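(* Let $\rho>1$. Then: (i) $0<\kappa^c_\rho(1)<1$; more precisely, if $1<\rho\le2$ then $\kappa^c_\rho(1)=\frac{2\sqrt\rho}{1+\rho}$, while if $\rho\ge2$ then $\kappa^c_\rho(1)=\frac{\sqrt{4+\rho^2}}{1+\rho}$. (ii) $0<\kappa^c_\rho<1$. (iii) There exists $\rho_0>2$ such that if $\rho\le\rho_0$ then $\kappa^c_\rho=\kappa^c_\rho(1)$. Consequently, if $1<\rho\le2$ then $\kappa^c_\rho=\frac{2\sqrt\rho}{1+\rho}$, while if $2\le\rho\le\rho_0$ then $\kappa^c_\rho=\frac{\sqrt{4+\rho^2}}{1+\rho}$.
   Context: Fix $\rho>1$ and an integer $k\ge1$. Set $r_1=r_{k+1}=1+\rho$ and $r_i=2$ for $2\le i\le k$. For $(a_i)_{2\le i\le k+1}\in[0,1)^k$ define $d_1=1+\rho$ and, for $2\le i\le k+1$, $d_i>0$ by $d_i^2=d_{i-1}^2+2r_ia_id_{i-1}+r_i^2$; write $\mathcal D(a_2,\dots,a_{k+1})=d_{k+1}$. Set $$\kappa^c_\rho(k)=\inf_{0\le a_2,\dots,a_{k+1}<1}\max\left(\left(\frac{4\rho}{(1+\rho)^2\sqrt{\prod_{2\le i\le k+1}(1-a_i^2)}}\right)^{\frac1{k+1}},\ \frac{2\rho}{\mathcal D(a_2,\dots,a_{k+1})}\right),$$ and $\kappa^c_\rho=\inf_{k\ge1}\kappa^c_\rho(k)$. *)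

theory Defs
  imports Complex_Main
begin

definition rad :: "real \<Rightarrow> nat \<Rightarrow> nat \<Rightarrow> real" where
  "rad \<rho> k i = (if i = 1 \<or> i = k + 1 then 1 + \<rho> else 2)"

(* dd \<rho> k a j = d_{j+1}; d_1 = 1 + rho,
   d_i = positive root of d_i^2 = d_{i-1}^2 + 2 r_i a_i d_{i-1} + r_i^2 *)
primrec dd :: "real \<Rightarrow> nat \<Rightarrow> (nat \<Rightarrow> real) \<Rightarrow> nat \<Rightarrow> real" where
  "dd \<rho> k a 0 = 1 + \<rho>"
| "dd \<rho> k a (Suc j) =
     sqrt ((dd \<rho> k a j)\<^sup>2 + 2 * rad \<rho> k (j + 2) * a (j + 2) * dd \<rho> k a j
           + (rad \<rho> k (j + 2))\<^sup>2)"

definition Dfun :: "real \<Rightarrow> nat \<Rightarrow> (nat \<Rightarrow> real) \<Rightarrow> real" where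
  "Dfun \<rho> k a = dd \<rho> k a k"

definition admissible :: "nat \<Rightarrow> (nat \<Rightarrow> real) set" where
  "admissible k = {a. \<forall>i\<in>{2..k+1}. 0 \<le> a i \<and> a i < 1}"

definition kappa_ck :: "real \<Rightarrow> nat \<Rightarrow> real" where
  "kappa_ck \<rho> k = (INF a \<in> admissible k.
      max ((4 * \<rho> / ((1 + \<rho>)\<^sup>2 * sqrt (\<Prod>i\<in>{2..k+1}. 1 - (a i)\<^sup>2)))
              powr (1 / real (k + 1)))
          (2 * \<rho> / Dfun \<rho> k a))"

definition kappa_c :: "real \<Rightarrow> real" where
  "kappa_c \<rho> = (INF k \<in> {1..}. kappa_ck \<rho> k)"

end

theory Submission imports Defs begin

definition T :: "real \<Rightarrow> nat \<Rightarrow> (nat \<Rightarrow> real) \<Rightarrow> real" where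
  "T \<rho> k a = max ((4 * \<rho> / ((1 + \<rho>)\<^sup>2 * sqrt (\<Prod>i\<in>{2..k+1}. 1 - (a i)\<^sup>2)))
              powr (1 / real (k + 1)))
          (2 * \<rho> / Dfun \<rho> k a)"

lemma kappa_ck_T: "kappa_ck \<rho> k = (INF a \<in> admissible k. T \<rho> k a)"
  by (simp add: kappa_ck_def T_def)

lemma adm_ne: "(\<lambda>_. 0) \<in> admissible k" by (simp add: admissible_def)

lemma T_lower:
  assumes r: "\<rho> > 1" and a: "a \<in> admissible k"
  shows "(4*\<rho>/(1+\<rho>)^2) powr (1 / real (k + 1)) \<le> T \<rho> k a"
proof -
  let ?P = "\<Prod>i\<in>{2..k+1}. 1 - (a i)\<^sup>2"
  have ai: "\<And>i. i \<in> {2..k+1} \<Longrightarrow> 0 \<le> a i \<and> a i < 1" using a by (auto simp: admissible_def)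
  have "\<And>i. i \<in> {2..k+1} \<Longrightarrow> 0 < 1 - (a i)\<^sup>2 \<and> 1 - (a i)\<^sup>2 \<le> 1"
  proof -
    fix i assume "i \<in> {2..k+1}"
    then have "0 \<le> a i" "a i < 1" using ai by auto
    then have "(a i)^2 < 1" by (simp add: power_less_one_iff abs_square_less_1)
    then show "0 < 1 - (a i)\<^sup>2 \<and> 1 - (a i)\<^sup>2 \<le> 1" by simp
  qed
  note h = this
  have P: "0 < ?P" "?P \<le> 1"
     apply (rule prod_pos) using h apply blast
    apply (rule prod_le_1) using h by (auto intro: less_imp_le)
  then have s: "0 < sqrt ?P" "sqrt ?P \<le> 1" by auto
  have "4*\<rho>/(1+\<rho>)^2 \<le> 4*\<rho>/((1+\<rho>)^2 * sqrt ?P)"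
    using r s by (simp add: divide_simps mult_left_le)
  then have "(4*\<rho>/(1+\<rho>)^2) powr (1 / real (k + 1)) \<le> (4*\<rho>/((1+\<rho>)^2 * sqrt ?P)) powr (1 / real (k + 1))"
    using r by (intro powr_mono2) auto
  then show ?thesis unfolding T_def by linarith
qed

definition h :: "real \<Rightarrow> real \<Rightarrow> real" where
  "h \<rho> t = max (sqrt (4*\<rho>/((1+\<rho>)^2*sqrt(1-t^2)))) (sqrt (2*\<rho>^2/((1+\<rho>)^2*(1+t))))"

lemma T1:
  assumes r: "\<rho> > 1" and a: "a \<in> admissible 1"
  shows "T \<rho> 1 a = h \<rho> (a 2)"
proof -
  have t: "0 \<le> a 2" "a 2 < 1" using a by (auto simp: admissible_def)
  then have "(a 2)^2 < 1" by (simp add: abs_square_less_1)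
  then have s: "0 < sqrt (1 - (a 2)^2)" by simp
  have 1: "(4 * \<rho> / ((1 + \<rho>)\<^sup>2 * sqrt (\<Prod>i\<in>{2..1+1}. 1 - (a i)\<^sup>2))) powr (1 / real (1 + 1))
      = sqrt (4*\<rho>/((1+\<rho>)^2*sqrt(1-(a 2)^2)))"
  proof -
    have e: "{2..1+1::nat} = {2}" by auto
    show ?thesis using r s by (simp only: e prod.insert prod.empty finite.emptyI empty_iff mult_1_right) (simp add: powr_half_sqrt)
  qed
  have D: "Dfun \<rho> 1 a = sqrt (2*(1+\<rho>)^2*(1+a 2))"
    by (simp add: Dfun_def rad_def algebra_simps power2_eq_square numeral_2_eq_2)
  have Dp: "0 < 2*(1+\<rho>)^2*(1+a 2)" using r t by simp
  have "2*\<rho> / Dfun \<rho> 1 a = sqrt (4*\<rho>^2) / sqrt (2*(1+\<rho>)^2*(1+a 2))"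
    unfolding D using r by (simp add: real_sqrt_mult)
  also have "\<dots> = sqrt (2*\<rho>^2/((1+\<rho>)^2*(1+a 2)))"
    by (simp add: real_sqrt_divide[symmetric])
  finally have 2: "2*\<rho> / Dfun \<rho> 1 a = sqrt (2*\<rho>^2/((1+\<rho>)^2*(1+a 2)))" .
  show ?thesis unfolding T_def h_def using 1 2 by simp
qed

lemma c1_sqrt: "\<rho> > 1 \<Longrightarrow> 2*sqrt \<rho>/(1+\<rho>) = sqrt (4*\<rho>/(1+\<rho>)^2)"
  by (simp add: real_sqrt_divide real_sqrt_mult)

lemma c2_sqrt: "\<rho> > 1 \<Longrightarrow> sqrt (4+\<rho>^2)/(1+\<rho>) = sqrt ((4+\<rho>^2)/(1+\<rho>)^2)"
  by (simp add: real_sqrt_divide)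

lemma h_low1:
  assumes r: "\<rho> > 1" and t: "0 \<le> t" "t < 1"
  shows "2*sqrt \<rho>/(1+\<rho>) \<le> h \<rho> t"
proof -
  have "t^2 < 1" using t by (simp add: abs_square_less_1)
  then have s: "0 < sqrt (1-t^2)" "sqrt (1-t^2) \<le> 1" by auto
  have "4*\<rho>/(1+\<rho>)^2 \<le> 4*\<rho>/((1+\<rho>)^2*sqrt(1-t^2))"
    using r s by (simp add: divide_simps mult_left_le)
  then have "sqrt (4*\<rho>/(1+\<rho>)^2) \<le> sqrt (4*\<rho>/((1+\<rho>)^2*sqrt(1-t^2)))"
    by (rule real_sqrt_le_mono)
  then show ?thesis unfolding h_def c1_sqrt[OF r] by linarith
qed

lemma h_at0:
  assumes r: "\<rho> > 1" "\<rho> \<le> 2"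
  shows "h \<rho> 0 = 2*sqrt \<rho>/(1+\<rho>)"
proof -
  have "2*\<rho>^2/((1+\<rho>)^2*(1+0)) \<le> 4*\<rho>/((1+\<rho>)^2*sqrt(1-0^2))"
    using r by (simp add: divide_simps power2_eq_square mult_right_mono)
  then have "sqrt (2*\<rho>^2/((1+\<rho>)^2*(1+0))) \<le> sqrt (4*\<rho>/((1+\<rho>)^2*sqrt(1-0^2)))"
    by (rule real_sqrt_le_mono)
  then have "h \<rho> 0 = sqrt (4*\<rho>/((1+\<rho>)^2*sqrt(1-0^2)))" unfolding h_def by linarith
  then show ?thesis using c1_sqrt[OF r(1)] by simp
qed

lemma h_low2:
  assumes r: "\<rho> > 1" and r2: "\<rho> \<ge> 2" and t: "0 \<le> t" "t < 1"
  shows "sqrt (4+\<rho>^2)/(1+\<rho>) \<le> h \<rho> t"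
proof -
  have "t^2 < 1" using t by (simp add: abs_square_less_1)
  then have s: "0 < sqrt (1-t^2)" "sqrt (1-t^2)^2 = 1 - t^2" by auto
  have u: "(1+\<rho>)^2 > 0" using r by simp
  have "(4+\<rho>^2) * sqrt (1-t^2) \<le> 4*\<rho> \<or> (1+t)*(4+\<rho>^2) \<le> 2*\<rho>^2"
  proof (rule ccontr)
    assume "\<not> ?thesis"
    then have A: "(4+\<rho>^2) * sqrt (1-t^2) > 4*\<rho>" and B: "(1+t)*(4+\<rho>^2) > 2*\<rho>^2" by auto
    have "((4+\<rho>^2) * sqrt (1-t^2))^2 > (4*\<rho>)^2"
      using A r by (intro power_strict_mono) auto
    then have A2: "(4+\<rho>^2)^2 * (1-t^2) > 16*\<rho>^2" using s by (simp add: power_mult_distrib)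
    have B1: "t*(4+\<rho>^2) > \<rho>^2 - 4" using B by (simp add: algebra_simps)
    show False
    proof (cases "\<rho>^2 - 4 \<ge> 0")
      case True
      have "(t*(4+\<rho>^2))^2 > (\<rho>^2 - 4)^2"
        using B1 True by (intro power_strict_mono) auto
      then have "t^2*(4+\<rho>^2)^2 > (\<rho>^2 - 4)^2" by (simp add: power_mult_distrib)
      with A2 show False by (simp add: algebra_simps power2_eq_square) 
    next
      case False
      have "\<rho>^2 \<ge> 2^2" using r2 power_mono[OF r2, of 2] by simp
      with False show False by simp
    qed
  qed
  then show ?thesis
  proof
    assume H: "(4+\<rho>^2) * sqrt (1-t^2) \<le> 4*\<rho>"
    have "(4+\<rho>^2)/(1+\<rho>)^2 \<le> 4*\<rho>/((1+\<rho>)^2*sqrt(1-t^2))"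
      using H u s by (simp add: divide_simps mult.commute)
    then have "sqrt ((4+\<rho>^2)/(1+\<rho>)^2) \<le> sqrt (4*\<rho>/((1+\<rho>)^2*sqrt(1-t^2)))"
      by (rule real_sqrt_le_mono)
    then show ?thesis unfolding h_def c2_sqrt[OF r] by linarith
  next
    assume H: "(1+t)*(4+\<rho>^2) \<le> 2*\<rho>^2"
    have "(4+\<rho>^2)/(1+\<rho>)^2 \<le> 2*\<rho>^2/((1+\<rho>)^2*(1+t))"
      using H u t by (simp add: divide_simps mult.commute)
    then have "sqrt ((4+\<rho>^2)/(1+\<rho>)^2) \<le> sqrt (2*\<rho>^2/((1+\<rho>)^2*(1+t)))"
      by (rule real_sqrt_le_mono)
    then show ?thesis unfolding h_def c2_sqrt[OF r] by linarith
  qed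
qed

lemma h_at2:
  assumes r: "\<rho> \<ge> 2"
  defines "t0 \<equiv> (\<rho>^2 - 4)/(\<rho>^2 + 4)"
  shows "0 \<le> t0" "t0 < 1" "h \<rho> t0 = sqrt (4+\<rho>^2)/(1+\<rho>)"
proof -
  have p: "\<rho>^2 \<ge> 4" using r power_mono[OF r, of 2] by simp
  show "0 \<le> t0" using p unfolding t0_def by simp
  have q: "\<rho>^2 + 4 > 0" by (simp add: add_nonneg_pos)
  show "t0 < 1" unfolding t0_def using q by (simp add: divide_simps)
  have "1 - t0^2 = (4*\<rho>/(\<rho>^2+4))^2"
    unfolding t0_def using q by (simp add: divide_simps) (simp add: algebra_simps power2_eq_square)
  then have s: "sqrt (1-t0^2) = 4*\<rho>/(\<rho>^2+4)" using r by simp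
  have F: "4*\<rho>/((1+\<rho>)^2*sqrt(1-t0^2)) = (4+\<rho>^2)/(1+\<rho>)^2"
    unfolding s using r q by (simp add: divide_simps)
  have G: "2*\<rho>^2/((1+\<rho>)^2*(1+t0)) = (4+\<rho>^2)/(1+\<rho>)^2"
    unfolding t0_def using r q by (simp add: divide_simps add.commute)
  show "h \<rho> t0 = sqrt (4+\<rho>^2)/(1+\<rho>)"
    unfolding h_def F G using c2_sqrt[of \<rho>] r by simp
qed

lemma T_nonneg: "\<rho> > 1 \<Longrightarrow> a \<in> admissible k \<Longrightarrow> 0 \<le> T \<rho> k a"
  by (rule order_trans[OF _ T_lower]) auto

lemma bddT: "\<rho> > 1 \<Longrightarrow> bdd_below (T \<rho> k ` admissible k)"
  by (rule bdd_belowI[of _ 0]) (auto intro: T_nonneg)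

lemma kck_low: "\<rho> > 1 \<Longrightarrow> (4*\<rho>/(1+\<rho>)^2) powr (1 / real (k + 1)) \<le> kappa_ck \<rho> k"
  unfolding kappa_ck_T
proof (rule cINF_greatest)
  fix a assume "\<rho> > 1" "a \<in> admissible k"
  then show "(4*\<rho>/(1+\<rho>)^2) powr (1 / real (k + 1)) \<le> T \<rho> k a" by (rule T_lower)
qed (use adm_ne in blast)

lemma k1_a:
  assumes r: "\<rho> > 1" "\<rho> \<le> 2"
  shows "kappa_ck \<rho> 1 = 2*sqrt \<rho>/(1+\<rho>)"
proof (rule antisym)
  have "T \<rho> 1 (\<lambda>_. 0) = 2*sqrt \<rho>/(1+\<rho>)"
    using T1[OF r(1) adm_ne] h_at0[OF r] by simp
  then show "kappa_ck \<rho> 1 \<le> 2*sqrt \<rho>/(1+\<rho>)"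
    unfolding kappa_ck_T by (intro cINF_lower2[OF bddT[OF r(1)] adm_ne]) simp
  show "2*sqrt \<rho>/(1+\<rho>) \<le> kappa_ck \<rho> 1"
    unfolding kappa_ck_T
  proof (rule cINF_greatest)
    fix a assume a: "a \<in> admissible 1"
    then have "0 \<le> a 2" "a 2 < 1" by (auto simp: admissible_def)
    then show "2*sqrt \<rho>/(1+\<rho>) \<le> T \<rho> 1 a" using T1[OF r(1) a] h_low1[OF r(1)] by simp
  qed (use adm_ne in blast)
qed

lemma k1_b:
  assumes r: "\<rho> \<ge> 2"
  shows "kappa_ck \<rho> 1 = sqrt (4+\<rho>^2)/(1+\<rho>)"
proof (rule antisym)
  have r1: "\<rho> > 1" using r by simp
  define t0 where "t0 = (\<rho>^2 - 4)/(\<rho>^2 + 4)"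
  have adm: "(\<lambda>_. t0) \<in> admissible 1" using h_at2(1,2)[OF r] unfolding t0_def admissible_def by auto
  have "T \<rho> 1 (\<lambda>_. t0) = sqrt (4+\<rho>^2)/(1+\<rho>)"
    using T1[OF r1 adm] h_at2(3)[OF r] unfolding t0_def by simp
  then show "kappa_ck \<rho> 1 \<le> sqrt (4+\<rho>^2)/(1+\<rho>)"
    unfolding kappa_ck_T by (intro cINF_lower2[OF bddT[OF r1] adm]) simp
  show "sqrt (4+\<rho>^2)/(1+\<rho>) \<le> kappa_ck \<rho> 1"
    unfolding kappa_ck_T
  proof (rule cINF_greatest)
    fix a assume a: "a \<in> admissible 1"
    then have "0 \<le> a 2" "a 2 < 1" by (auto simp: admissible_def)
    then show "sqrt (4+\<rho>^2)/(1+\<rho>) \<le> T \<rho> 1 a" using T1[OF r1 a] h_low2[OF r1 r] by simp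
  qed (use adm_ne in blast)
qed

lemma x_bounds: "(\<rho>::real) > 1 \<Longrightarrow> 0 < 4*\<rho>/(1+\<rho>)^2 \<and> 4*\<rho>/(1+\<rho>)^2 < 1"
proof -
  assume r: "\<rho> > 1"
  have e: "(1+\<rho>)^2 - 4*\<rho> = (\<rho>-1)^2" by (simp add: power2_eq_square algebra_simps)
  have "(\<rho>-1)^2 > 0" using r by simp
  then have "4*\<rho> < (1+\<rho>)^2" using e by linarith
  then show ?thesis using r by simp
qed

lemma cube_root_ge:
  fixes c x :: real
  assumes c: "0 < c" and x: "0 < x" and h: "c^6 \<le> x^2"
  shows "c \<le> x powr (1/3)"
proof -
  have "(c^3)^2 = c^(3*2)" by (simp only: power_mult)
  also have "c^(3*2) = c^6" by simp
  finally have e6: "(c^3)^2 = c^6" .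
  have "(c^3)^2 \<le> x^2" using h e6 by linarith
  moreover have "0 \<le> x" using x by linarith
  ultimately have c3: "c^3 \<le> x" by (rule power2_le_imp_le)
  have "(c powr (real 3)) powr (1/3) = c powr (real 3 * (1/3))" by (rule powr_powr)
  also have "real 3 * (1/3) = 1" by simp
  finally have "(c powr (real 3)) powr (1/3) = c" using c by simp
  then have "c = (c powr (real 3)) powr (1/3)" by simp
  also have "c powr (real 3) = c^3" using c by (rule powr_realpow)
  also have "(c^3) powr (1/3) \<le> x powr (1/3)" using c c3 by (intro powr_mono2) auto
  finally show ?thesis .
qed

lemma sqrt6: "0 \<le> (x::real) \<Longrightarrow> (sqrt x)^6 = x^3"
proof -
  assume x: "0 \<le> x"
  have "(sqrt x)^6 = ((sqrt x)^2)^3" by (simp flip: power_mult)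
  then show ?thesis using x by simp
qed

lemma poly_bd:
  assumes r: "2 \<le> (\<rho>::real)" "\<rho> \<le> 41/20"
  shows "(4+\<rho>^2)^3 \<le> (4*\<rho>)^2*(1+\<rho>)^2"
proof -
  have "\<rho>^2 \<le> (41/20)^2" using r by (intro power_mono) auto
  then have "4+\<rho>^2 \<le> 4 + (41/20)^2" by simp
  then have "(4+\<rho>^2)^3 \<le> (4 + (41/20)^2)^3" by (intro power_mono) (auto simp: add_nonneg_nonneg)
  also have "\<dots> \<le> (4*2)^2*(1+2)^2" by (simp add: power3_eq_cube power2_eq_square)
  also have "\<dots> \<le> (4*\<rho>)^2*(1+\<rho>)^2"
    using r by (intro mult_mono power_mono) auto
  finally show ?thesis .
qed

lemma y_bd:
  assumes r: "2 \<le> (\<rho>::real)" "\<rho> \<le> 41/20"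
  shows "((4+\<rho>^2)/(1+\<rho>)^2)^3 \<le> (4*\<rho>/(1+\<rho>)^2)^2"
proof -
  define u where "u = (1+\<rho>)^2"
  have u: "u > 0" unfolding u_def using r by simp
  define y where "y = (4+\<rho>^2)/u"
  define x where "x = 4*\<rho>/u"
  have yu: "y*u = 4+\<rho>^2" unfolding y_def using u by simp
  have xu: "x*u = 4*\<rho>" unfolding x_def using u by simp
  have "y^3 * u^3 = (y*u)^3" by (simp add: power_mult_distrib)
  also have "\<dots> = (4+\<rho>^2)^3" using yu by simp
  also have "\<dots> \<le> (4*\<rho>)^2 * u" using poly_bd[OF r] unfolding u_def by simp
  also have "\<dots> = (x*u)^2 * u" using xu by simp
  also have "\<dots> = x^2 * u^3" by (simp add: power_mult_distrib power2_eq_square power3_eq_cube)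
  finally have "y^3 * u^3 \<le> x^2 * u^3" .
  then have "y^3 \<le> x^2" using u by simp
  then show ?thesis unfolding x_def y_def u_def .
qed

lemma kc_ge:
  assumes r: "\<rho> > 1" "\<rho> \<le> 41/20" and k: "k \<ge> 1"
  shows "kappa_ck \<rho> 1 \<le> kappa_ck \<rho> k"
proof (cases "k = 1")
  case False
  then have k2: "k \<ge> 2" using k by simp
  define x where "x = 4*\<rho>/(1+\<rho>)^2"
  have x: "0 < x" "x < 1" using x_bounds[OF r(1)] unfolding x_def by auto
  have c: "0 < kappa_ck \<rho> 1 \<and> (kappa_ck \<rho> 1)^6 \<le> x^2"
  proof (cases "\<rho> \<le> 2")
    case True
    have e: "kappa_ck \<rho> 1 = sqrt x" unfolding k1_a[OF r(1) True] c1_sqrt[OF r(1)] x_def ..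
    have "x^3 \<le> x^2" using x by (intro power_decreasing) auto
    moreover have "(sqrt x)^6 = x^3" using x by (intro sqrt6) auto
    moreover have "0 < sqrt x" using x by simp
    ultimately show ?thesis using e by simp
  next
    case False
    then have r2: "\<rho> \<ge> 2" by simp
    have e: "kappa_ck \<rho> 1 = sqrt ((4+\<rho>^2)/(1+\<rho>)^2)" unfolding k1_b[OF r2] c2_sqrt[OF r(1)] ..
    have pos: "0 < (4+\<rho>^2)/(1+\<rho>)^2" using r by (simp add: add_pos_nonneg)
    have s6: "(kappa_ck \<rho> 1)^6 = ((4+\<rho>^2)/(1+\<rho>)^2)^3" unfolding e using pos by (intro sqrt6) auto
    have "(kappa_ck \<rho> 1)^6 \<le> x^2" unfolding s6 x_def by (rule y_bd[OF r2 r(2)])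
    moreover have "0 < kappa_ck \<rho> 1" unfolding e using pos by simp
    ultimately show ?thesis by simp
  qed
  have "kappa_ck \<rho> 1 \<le> x powr (1/3)" using cube_root_ge c x by blast
  also have "\<dots> \<le> x powr (1 / real (k+1))"
    using x k2 by (intro powr_mono') (auto simp: divide_simps)
  also have "\<dots> \<le> kappa_ck \<rho> k" using kck_low[OF r(1)] unfolding x_def .
  finally show ?thesis .
qed simp

lemma c1_bounds:
  assumes r: "\<rho> > 1"
  shows "0 < kappa_ck \<rho> 1 \<and> kappa_ck \<rho> 1 < 1"
proof (cases "\<rho> \<le> 2")
  case True
  have x: "0 < 4*\<rho>/(1+\<rho>)^2" "4*\<rho>/(1+\<rho>)^2 < 1" using x_bounds[OF r] by auto
  show ?thesis unfolding k1_a[OF r True] c1_sqrt[OF r] using x by simp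
next
  case False
  have p: "0 < (4+\<rho>^2)/(1+\<rho>)^2" using r by (simp add: add_pos_nonneg)
  have "4+\<rho>^2 < (1+\<rho>)^2" using False by (simp add: power2_eq_square algebra_simps)
  then have "(4+\<rho>^2)/(1+\<rho>)^2 < 1" using r by simp
  moreover have "kappa_ck \<rho> 1 = sqrt ((4+\<rho>^2)/(1+\<rho>)^2)"
    using k1_b[of \<rho>] False c2_sqrt[OF r] by simp
  ultimately show ?thesis using p by simp
qed

lemma bddK: "\<rho> > 1 \<Longrightarrow> bdd_below (kappa_ck \<rho> ` {1..})"
  by (rule bdd_belowI[of _ 0]) (auto intro: order_trans[OF _ kck_low])

lemma kc_lower: 
  assumes r: "\<rho> > 1"
  shows "4*\<rho>/(1+\<rho>)^2 \<le> kappa_c \<rho>"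
  unfolding kappa_c_def
proof (rule cINF_greatest)
  fix k :: nat assume "k \<in> {1..}"
  have x: "0 < 4*\<rho>/(1+\<rho>)^2" "4*\<rho>/(1+\<rho>)^2 < 1" using x_bounds[OF r] by auto
  have "4*\<rho>/(1+\<rho>)^2 = (4*\<rho>/(1+\<rho>)^2) powr 1" using x by (metis less_imp_le powr_one_gt_zero_iff)
  also have "\<dots> \<le> (4*\<rho>/(1+\<rho>)^2) powr (1 / real (k+1))"
    using x by (intro powr_mono') (auto simp: divide_simps)
  also have "\<dots> \<le> kappa_ck \<rho> k" by (rule kck_low[OF r])
  finally show "4*\<rho>/(1+\<rho>)^2 \<le> kappa_ck \<rho> k" .
qed auto

lemma kc_le1: "\<rho> > 1 \<Longrightarrow> kappa_c \<rho> \<le> kappa_ck \<rho> 1"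
  unfolding kappa_c_def by (rule cINF_lower[OF bddK]) auto

lemma kc_eq:
  assumes r: "\<rho> > 1" "\<rho> \<le> 41/20"
  shows "kappa_c \<rho> = kappa_ck \<rho> 1"
proof (rule antisym)
  show "kappa_c \<rho> \<le> kappa_ck \<rho> 1" by (rule kc_le1[OF r(1)])
  show "kappa_ck \<rho> 1 \<le> kappa_c \<rho>" unfolding kappa_c_def
  proof (rule cINF_greatest)
    fix k :: nat assume "k \<in> {1..}"
    then show "kappa_ck \<rho> 1 \<le> kappa_ck \<rho> k" by (intro kc_ge[OF r]) auto
  qed auto
qed

lemma part1:
  assumes r: "(\<rho>::real) > 1"
  shows "0 < kappa_ck \<rho> 1 \<and> kappa_ck \<rho> 1 < 1
          \<and> (\<rho> \<le> 2 \<longrightarrow> kappa_ck \<rho> 1 = 2 * sqrt \<rho> / (1 + \<rho>))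
          \<and> (2 \<le> \<rho> \<longrightarrow> kappa_ck \<rho> 1 = sqrt (4 + \<rho>\<^sup>2) / (1 + \<rho>))
          \<and> 0 < kappa_c \<rho> \<and> kappa_c \<rho> < 1"
proof -
  have a1: "0 < kappa_ck \<rho> 1" by (rule conjunct1[OF c1_bounds[OF r]])
  have a2: "kappa_ck \<rho> 1 < 1" by (rule conjunct2[OF c1_bounds[OF r]])
  have b: "\<rho> \<le> 2 \<longrightarrow> kappa_ck \<rho> 1 = 2 * sqrt \<rho> / (1 + \<rho>)" by (rule impI) (rule k1_a[OF r])
  have c: "2 \<le> \<rho> \<longrightarrow> kappa_ck \<rho> 1 = sqrt (4 + \<rho>\<^sup>2) / (1 + \<rho>)" by (rule impI) (rule k1_b)
  have d: "0 < kappa_c \<rho>" by (rule order_less_le_trans[OF conjunct1[OF x_bounds[OF r]] kc_lower[OF r]])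
  have e: "kappa_c \<rho> < 1" by (rule order_le_less_trans[OF kc_le1[OF r] a2])
  show ?thesis by (intro conjI a1 a2 b c d e)
qed

lemma part2:
  assumes r: "1 < (\<rho>::real) \<and> \<rho> \<le> 41/20"
  shows "kappa_c \<rho> = kappa_ck \<rho> 1
             \<and> (\<rho> \<le> 2 \<longrightarrow> kappa_c \<rho> = 2 * sqrt \<rho> / (1 + \<rho>))
             \<and> (2 \<le> \<rho> \<longrightarrow> kappa_c \<rho> = sqrt (4 + \<rho>\<^sup>2) / (1 + \<rho>))"
proof -
  have r1: "1 < \<rho>" by (rule conjunct1[OF r])
  have r2: "\<rho> \<le> 41/20" by (rule conjunct2[OF r])
  have e: "kappa_c \<rho> = kappa_ck \<rho> 1" by (rule kc_eq[OF r1 r2])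
  have b: "\<rho> \<le> 2 \<longrightarrow> kappa_c \<rho> = 2 * sqrt \<rho> / (1 + \<rho>)" unfolding e by (rule impI) (rule k1_a[OF r1])
  have c: "2 \<le> \<rho> \<longrightarrow> kappa_c \<rho> = sqrt (4 + \<rho>\<^sup>2) / (1 + \<rho>)" unfolding e by (rule impI) (rule k1_b)
  show ?thesis by (intro conjI e b c)
qed

theorem lemma2p1:
  shows "(\<forall>\<rho>::real. \<rho> > 1 \<longrightarrow>
            0 < kappa_ck \<rho> 1 \<and> kappa_ck \<rho> 1 < 1
          \<and> (\<rho> \<le> 2 \<longrightarrow> kappa_ck \<rho> 1 = 2 * sqrt \<rho> / (1 + \<rho>))
          \<and> (2 \<le> \<rho> \<longrightarrow> kappa_ck \<rho> 1 = sqrt (4 + \<rho>\<^sup>2) / (1 + \<rho>))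
          \<and> 0 < kappa_c \<rho> \<and> kappa_c \<rho> < 1)
       \<and> (\<exists>\<rho>0::real. \<rho>0 > 2 \<and>
            (\<forall>\<rho>::real. 1 < \<rho> \<and> \<rho> \<le> \<rho>0 \<longrightarrow>
               kappa_c \<rho> = kappa_ck \<rho> 1
             \<and> (\<rho> \<le> 2 \<longrightarrow> kappa_c \<rho> = 2 * sqrt \<rho> / (1 + \<rho>))
             \<and> (2 \<le> \<rho> \<longrightarrow> kappa_c \<rho> = sqrt (4 + \<rho>\<^sup>2) / (1 + \<rho>))))"
proof (rule conjI)
  show "\<forall>\<rho>::real. \<rho> > 1 \<longrightarrow>
            0 < kappa_ck \<rho> 1 \<and> kappa_ck \<rho> 1 < 1
          \<and> (\<rho> \<le> 2 \<longrightarrow> kappa_ck \<rho> 1 = 2 * sqrt \<rho> / (1 + \<rho>))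
          \<and> (2 \<le> \<rho> \<longrightarrow> kappa_ck \<rho> 1 = sqrt (4 + \<rho>\<^sup>2) / (1 + \<rho>))
          \<and> 0 < kappa_c \<rho> \<and> kappa_c \<rho> < 1"
    by (intro allI impI) (rule part1)
  have g: "(41/20::real) > 2" by simp
  show "\<exists>\<rho>0::real. \<rho>0 > 2 \<and>
            (\<forall>\<rho>::real. 1 < \<rho> \<and> \<rho> \<le> \<rho>0 \<longrightarrow>
               kappa_c \<rho> = kappa_ck \<rho> 1
             \<and> (\<rho> \<le> 2 \<longrightarrow> kappa_c \<rho> = 2 * sqrt \<rho> / (1 + \<rho>))
             \<and> (2 \<le> \<rho> \<longrightarrow> kappa_c \<rho> = sqrt (4 + \<rho>\<^sup>2) / (1 + \<rho>)))"
    apply (rule exI[of _ "41/20"])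
    apply (rule conjI[OF g])
    apply (intro allI impI)
    apply (rule part2)
    apply assumption
    done
qed

end
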